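(* Let $G$ be a simple graph and let $C=v-u-u_1-u_2-\dots-u_\ell-u'-v$ be a cycle of length at least $6$ in $G$ such that $u-u_1-\dots-u_\ell-u'$ is an induced path of $G$. Then $G$ has an induced cycle of length at least $4$, or $G$ has an induced claw $J$ and a triangle $T$ with $V(J)\cap V(T)\neq\emptyset$.
   Context: A claw is the graph $K_{1,3}$. *)

theory Defs
  imports Main
begin

definition simple_graph :: "'a set \<Rightarrow> ('a \<Rightarrow> 'a \<Rightarrow> bool) \<Rightarrow> bool" where
  "simple_graph V E \<longleftrightarrow> finite V \<and>
     (\<forall>x y. E x y \<longrightarrow> x \<in> V \<and> y \<in> V) \<and>
     (\<forall>x y. E x y \<longrightarrow> E y x) \<and> (\<forall>x. \<not> E x x)"

definition is_cycle :: "'a set \<Rightarrow> ('a \<Rightarrow> 'a \<Rightarrow> bool) \<Rightarrow> 'a list \<Rightarrow> bool" where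
  "is_cycle V E cs \<longleftrightarrow> length cs \<ge> 3 \<and> distinct cs \<and> set cs \<subseteq> V \<and>
     (\<forall>i < length cs. E (cs ! i) (cs ! ((i + 1) mod length cs)))"

definition induced_cycle :: "'a set \<Rightarrow> ('a \<Rightarrow> 'a \<Rightarrow> bool) \<Rightarrow> 'a list \<Rightarrow> bool" where
  "induced_cycle V E cs \<longleftrightarrow> is_cycle V E cs \<and>
     (\<forall>i < length cs. \<forall>j < length cs. E (cs ! i) (cs ! j) \<longrightarrow>
        j = (i + 1) mod length cs \<or> i = (j + 1) mod length cs)"

definition induced_path :: "'a set \<Rightarrow> ('a \<Rightarrow> 'a \<Rightarrow> bool) \<Rightarrow> 'a list \<Rightarrow> bool" where
  "induced_path V E ps \<longleftrightarrow> distinct ps \<and> set ps \<subseteq> V \<and>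
     (\<forall>i < length ps. \<forall>j < length ps. E (ps ! i) (ps ! j) \<longleftrightarrow> (j = i + 1 \<or> i = j + 1))"

definition induced_claw :: "'a set \<Rightarrow> ('a \<Rightarrow> 'a \<Rightarrow> bool) \<Rightarrow> 'a \<Rightarrow> 'a \<Rightarrow> 'a \<Rightarrow> 'a \<Rightarrow> bool" where
  "induced_claw V E c a b d \<longleftrightarrow> {c, a, b, d} \<subseteq> V \<and> distinct [c, a, b, d] \<and>
     E c a \<and> E c b \<and> E c d \<and> \<not> E a b \<and> \<not> E a d \<and> \<not> E b d"

definition triangle :: "'a set \<Rightarrow> ('a \<Rightarrow> 'a \<Rightarrow> bool) \<Rightarrow> 'a \<Rightarrow> 'a \<Rightarrow> 'a \<Rightarrow> bool" where
  "triangle V E x y z \<longleftrightarrow> {x, y, z} \<subseteq> V \<and> distinct [x, y, z] \<and> E x y \<and> E y z \<and> E x z"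

end

theory Submission
  imports Defs
begin

lemma cyc_lemma:
  assumes sg: "simple_graph V E" and ip: "induced_path V E ps"
    and vV: "v \<in> V" and vn: "v \<notin> set ps"
    and ab: "a + 2 \<le> b" and bl: "b < length ps"
    and ea: "E v (ps!a)" and eb: "E v (ps!b)"
    and nk: "\<forall>k. a < k \<and> k < b \<longrightarrow> \<not> E v (ps!k)"
  shows "induced_cycle V E (v # map (\<lambda>k. ps!k) [a..<Suc b])"
proof -
  let ?cs = "v # map (\<lambda>k. ps!k) [a..<Suc b]"
  have len: "length ?cs = b - a + 2" using ab by simp
  have c0: "?cs ! 0 = v" by simp
  have cS: "?cs ! Suc j = ps ! (a+j)" if "j < b - a + 1" for j
    using that ab by (simp del: upt_Suc add: nth_map_upt)
  have sym: "\<And>x y. E x y \<Longrightarrow> E y x" using sg unfolding simple_graph_def by blast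
  have irr: "\<And>x. \<not> E x x" using sg unfolding simple_graph_def by blast
  have pe: "\<And>i j. i < length ps \<Longrightarrow> j < length ps \<Longrightarrow> E (ps!i) (ps!j) \<longleftrightarrow> (j = i + 1 \<or> i = j + 1)"
    using ip unfolding induced_path_def by blast
  have dps: "distinct ps" and sps: "set ps \<subseteq> V" using ip unfolding induced_path_def by auto
  have dist: "distinct ?cs"
    using dps vn bl by (auto simp: distinct_map inj_on_def nth_eq_iff_index_eq)
  have setc: "set ?cs \<subseteq> V" using vV sps bl by (auto simp: nth_mem subsetD)
  have edges: "\<forall>i < length ?cs. E (?cs ! i) (?cs ! ((i + 1) mod length ?cs))"
  proof (intro allI impI)
    fix i assume i: "i < length ?cs"
    show "E (?cs ! i) (?cs ! ((i + 1) mod length ?cs))"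
    proof (cases i)
      case 0
      then show ?thesis using ab ea len cS[of 0] by simp
    next
      case (Suc j)
      show ?thesis
      proof (cases "j = b - a")
        case True
        then have "(i+1) mod length ?cs = 0" using len Suc ab by simp
        then show ?thesis using True Suc cS[of j] ab eb sym by simp
      next
        case False
        then have "(i+1) mod length ?cs = Suc (Suc j)" using len Suc i by simp
        moreover have "j + 1 < b - a + 1" using False Suc i len by simp
        ultimately show ?thesis using Suc cS[of j] cS[of "j+1"] pe[of "a+j" "a+(j+1)"] bl ab
          by simp
      qed
    qed
  qed
  have ind: "\<forall>i < length ?cs. \<forall>j < length ?cs. E (?cs ! i) (?cs ! j) \<longrightarrow>
        j = (i + 1) mod length ?cs \<or> i = (j + 1) mod length ?cs"
  proof (intro allI impI)
    fix i j assume i: "i < length ?cs" and j: "j < length ?cs" and e: "E (?cs ! i) (?cs ! j)"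
    show "j = (i + 1) mod length ?cs \<or> i = (j + 1) mod length ?cs"
    proof (cases i)
      case 0
      show ?thesis
      proof (cases j)
        case 0 then show ?thesis using \<open>i = 0\<close> e irr by simp
      next
        case (Suc j')
        have "j' < b - a + 1" using Suc j len by simp
        then have "E v (ps!(a+j'))" using e 0 Suc cS by simp
        then have "j' = 0 \<or> a + j' = b" using nk[rule_format, of "a+j'"] \<open>j' < b - a + 1\<close> ab by fastforce
        then show ?thesis using 0 Suc len ab by auto
      qed
    next
      case (Suc i')
      show ?thesis
      proof (cases j)
        case 0
        have "i' < b - a + 1" using Suc i len by simp
        then have "E v (ps!(a+i'))" using e 0 Suc cS sym by simp
        then have "i' = 0 \<or> a + i' = b" using nk[rule_format, of "a+i'"] \<open>i' < b - a + 1\<close> ab by fastforce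
        then show ?thesis using 0 Suc len ab by auto
      next
        case (Suc j')
        have "i' < b - a + 1" "j' < b - a + 1" using Suc \<open>i = Suc i'\<close> i j len by auto
        then have "E (ps!(a+i')) (ps!(a+j'))" using e Suc \<open>i = Suc i'\<close> cS by simp
        then have "a+j' = a+i'+1 \<or> a+i' = a+j'+1" using pe \<open>i' < b - a + 1\<close> \<open>j' < b - a + 1\<close> bl ab by simp
        then show ?thesis using Suc \<open>i = Suc i'\<close> i j len by auto
      qed
    qed
  qed
  show ?thesis unfolding induced_cycle_def is_cycle_def
    using dist setc edges ind len ab by simp
qed

theorem mainTheorem14:
  fixes V :: "'a set" and E :: "'a \<Rightarrow> 'a \<Rightarrow> bool"
    and v u u' :: 'a and us :: "'a list"
  assumes "simple_graph V E"
    and "is_cycle V E (v # u # us @ [u'])"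
    and "length (v # u # us @ [u']) \<ge> 6"
    and "induced_path V E (u # us @ [u'])"
  shows "(\<exists>cs. induced_cycle V E cs \<and> length cs \<ge> 4) \<or>
         (\<exists>c a b d x y z. induced_claw V E c a b d \<and> triangle V E x y z \<and>
            {c, a, b, d} \<inter> {x, y, z} \<noteq> {})"
proof -
  define ps where "ps = u # us @ [u']"
  have sg: "simple_graph V E" and ip: "induced_path V E ps" using assms ps_def by auto
  have sym: "\<And>x y. E x y \<Longrightarrow> E y x" using sg unfolding simple_graph_def by blast
  have pe: "\<And>i j. i < length ps \<Longrightarrow> j < length ps \<Longrightarrow> E (ps!i) (ps!j) \<longleftrightarrow> (j = i + 1 \<or> i = j + 1)"
    using ip unfolding induced_path_def by blast
  have dps: "distinct ps" and sps: "set ps \<subseteq> V" using ip unfolding induced_path_def by auto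
  have cyc: "is_cycle V E (v # ps)" using assms ps_def by simp
  have lp: "length ps \<ge> 5" using assms ps_def by simp
  have vn: "v \<notin> set ps" and vV: "v \<in> V" using cyc unfolding is_cycle_def by auto
  have ce: "\<forall>i < length (v#ps). E ((v#ps) ! i) ((v#ps) ! ((i + 1) mod length (v#ps)))"
    using cyc unfolding is_cycle_def by blast
  have "ps \<noteq> []" using lp by auto
  then have e0: "E v (ps!0)" using ce[rule_format, of 0] lp by simp
  have "E ((v#ps) ! length ps) ((v#ps) ! 0)" using ce[rule_format, of "length ps"] by simp
  then have em: "E v (ps!(length ps - 1))" using sym lp
    by (metis Suc_diff_1 nth_Cons_Suc nth_Cons_0 \<open>ps \<noteq> []\<close> length_greater_0_conv)
  show ?thesis
  proof (cases "\<forall>i < length ps. E v (ps!i)")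
    case True
    have l: "0 < length ps" "1 < length ps" "2 < length ps" "4 < length ps" using lp by auto
    have n02: "\<not> E (ps!0) (ps!2)" using pe[OF l(1) l(3)] by simp
    have n04: "\<not> E (ps!0) (ps!4)" using pe[OF l(1) l(4)] by simp
    have n24: "\<not> E (ps!2) (ps!4)" using pe[OF l(3) l(4)] by simp
    have y01: "E (ps!0) (ps!1)" using pe[OF l(1) l(2)] by simp
    have m: "ps!0 \<in> set ps" "ps!1 \<in> set ps" "ps!2 \<in> set ps" "ps!4 \<in> set ps"
      using l by (auto simp: nth_mem)
    have d: "ps!0 \<noteq> ps!2" "ps!0 \<noteq> ps!4" "ps!2 \<noteq> ps!4" "ps!0 \<noteq> ps!1"
      using dps l by (auto simp: nth_eq_iff_index_eq)
    have ev: "E v (ps!0)" "E v (ps!1)" "E v (ps!2)" "E v (ps!4)" using True l by auto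
    have "induced_claw V E v (ps!0) (ps!2) (ps!4)"
      unfolding induced_claw_def using ev n02 n04 n24 d m vn vV sps by auto
    moreover have "triangle V E v (ps!0) (ps!1)"
      unfolding triangle_def using ev y01 d m vn vV sps by auto
    ultimately show ?thesis by blast
  next
    case False
    then obtain i where i: "i < length ps" "\<not> E v (ps!i)" by blast
    have i0: "0 < i" using i e0 by (cases i) auto
    have im: "i < length ps - 1" using i em by (metis Suc_diff_1 i0 less_SucE order.strict_trans)
    define A where "A = {k. k < i \<and> E v (ps!k)}"
    define B where "B = {k. i < k \<and> k < length ps \<and> E v (ps!k)}"
    have fA: "finite A" "A \<noteq> {}" using A_def e0 i0 by auto
    have fB: "finite B" "B \<noteq> {}" using B_def em im by auto
    define a where "a = Max A"
    define b where "b = Min B"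
    have aA: "a \<in> A" using fA a_def by simp
    have bB: "b \<in> B" using fB b_def by simp
    have amax: "\<And>k. k \<in> A \<Longrightarrow> k \<le> a" using fA a_def by simp
    have bmin: "\<And>k. k \<in> B \<Longrightarrow> b \<le> k" using fB b_def by simp
    have nk: "\<forall>k. a < k \<and> k < b \<longrightarrow> \<not> E v (ps!k)"
    proof (intro allI impI)
      fix k assume k: "a < k \<and> k < b"
      show "\<not> E v (ps!k)"
      proof
        assume ek: "E v (ps!k)"
        consider "k < i" | "k = i" | "i < k" by linarith
        then show False
        proof cases
          case 1 then have "k \<in> A" using A_def ek by simp
          then show False using amax k by fastforce
        next
          case 2 then show False using ek i by simp
        next
          case 3 then have "k \<in> B" using B_def ek k bB by simp
          then show False using bmin k by fastforce
        qed
      qed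
    qed
    have "induced_cycle V E (v # map (\<lambda>k. ps!k) [a..<Suc b])"
      by (rule cyc_lemma[OF sg ip vV vn]) (use aA bB A_def B_def nk in auto)
    moreover have "length (v # map (\<lambda>k. ps!k) [a..<Suc b]) \<ge> 4"
      using aA bB A_def B_def by auto
    ultimately show ?thesis by blast
  qed
qed

end
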